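(* Let $p$ be a prime number and $n\in\mathbb N$. Suppose one of the following holds: (i) $A$ is a Lagrangian in $\mathbb Z_n\times\mathbb Z_n$; (ii) $A\subseteq\mathbb Z_p\times\mathbb Z_p$ complements some Lagrangian of $\mathbb Z_p\times\mathbb Z_p$ (here the ambient group is $\mathbb Z_p\times\mathbb Z_p$); (iii) $A\subseteq\mathbb Z_{p^2}\times\mathbb Z_{p^2}$ complements the non-cyclic Lagrangian $p\mathbb Z_{p^2}\times p\mathbb Z_{p^2}$ of $\mathbb Z_{p^2}\times\mathbb Z_{p^2}$ (here the ambient group is $\mathbb Z_{p^2}\times\mathbb Z_{p^2}$). Then, in the respective ambient group $G$, for every $B\subseteq G$ such that $(A,B)$ is a tiling pair, $(B,A)$ is a symplectic spectral pair (i.e. $A$ is a symplectic spectrum of $B$); and for every $S\subseteq G$ such that $(A,S)$ is a symplectic spectral pair, $(A,S)$ is a tiling pair (i.e. $A$ is a tiling complement of $S$).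
   Context: Let $G=\mathbb Z_N\times\mathbb Z_N$ ($N=n$, $p$ or $p^2$ according to the case). The symplectic form is $\langle x,y\rangle_s=x_1y_2-x_2y_1$ for $x=(x_1,x_2),y=(y_1,y_2)\in G$. For $H\subseteq G$, $H^{\perp_s}=\{g\in G:\langle g,h\rangle_s=0\ \forall h\in H\}$; $H$ is a Lagrangian if $H=H^{\perp_s}$ (equivalently, $H$ is a subgroup of order $N$). A pair $(A,B)$ of subsets of $G$ is a tiling pair (and $A,B$ complement each other) if $\{A+b\}_{b\in B}$ is a partition of $G$. A pair $(A,S)$ of subsets of $G$ is a symplectic spectral pair ($S$ is a symplectic spectrum of $A$) if the functions $\{a\mapsto e^{\frac{2\pi i}{N}\langle a,s\rangle_s}\}_{s\in S}$ form an orthogonal basis of $L^2(A)$ with respect to counting measure on $A$. *)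

theory Defs
  imports "HOL-Analysis.Analysis"
begin

(* The group Z_N x Z_N, elements represented by canonical residues in {0..<N} *)
definition grp :: "nat \<Rightarrow> (int \<times> int) set" where
  "grp N = {0..<int N} \<times> {0..<int N}"

definition gadd :: "nat \<Rightarrow> int \<times> int \<Rightarrow> int \<times> int \<Rightarrow> int \<times> int" where
  "gadd N x y = ((fst x + fst y) mod int N, (snd x + snd y) mod int N)"

(* symplectic form <x,y>_s = x1 y2 - x2 y1 (as an integer; reduced mod N where relevant) *)
definition symp :: "int \<times> int \<Rightarrow> int \<times> int \<Rightarrow> int" where
  "symp x y = fst x * snd y - snd x * fst y"

definition symp_perp :: "nat \<Rightarrow> (int \<times> int) set \<Rightarrow> (int \<times> int) set" where
  "symp_perp N H = {g \<in> grp N. \<forall>h\<in>H. int N dvd symp g h}"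

definition lagrangian :: "nat \<Rightarrow> (int \<times> int) set \<Rightarrow> bool" where
  "lagrangian N H \<longleftrightarrow> H \<subseteq> grp N \<and> H = symp_perp N H"

definition tiling_pair :: "nat \<Rightarrow> (int \<times> int) set \<Rightarrow> (int \<times> int) set \<Rightarrow> bool" where
  "tiling_pair N A B \<longleftrightarrow> A \<subseteq> grp N \<and> B \<subseteq> grp N \<and>
     (\<forall>g\<in>grp N. \<exists>!ab. fst ab \<in> A \<and> snd ab \<in> B \<and> gadd N (fst ab) (snd ab) = g)"

definition schar :: "nat \<Rightarrow> int \<times> int \<Rightarrow> int \<times> int \<Rightarrow> complex" where
  "schar N s a = exp (2 * pi * \<i> * of_int (symp a s) / of_nat N)"

(* the functions {schar N s}_{s in S} form an orthogonal basis of L^2(A), counting measure *)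
definition symp_spectral_pair :: "nat \<Rightarrow> (int \<times> int) set \<Rightarrow> (int \<times> int) set \<Rightarrow> bool" where
  "symp_spectral_pair N A S \<longleftrightarrow> A \<subseteq> grp N \<and> S \<subseteq> grp N \<and>
     (\<forall>s\<in>S. \<forall>t\<in>S. s \<noteq> t \<longrightarrow> (\<Sum>a\<in>A. schar N s a * cnj (schar N t a)) = 0) \<and>
     (\<forall>c :: int \<times> int \<Rightarrow> complex. (\<forall>a\<in>A. (\<Sum>s\<in>S. c s * schar N s a) = 0) \<longrightarrow> (\<forall>s\<in>S. c s = 0)) \<and>
     (\<forall>f :: int \<times> int \<Rightarrow> complex. \<exists>c :: int \<times> int \<Rightarrow> complex.
         \<forall>a\<in>A. f a = (\<Sum>s\<in>S. c s * schar N s a))"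

definition tiling_spectral_dual :: "nat \<Rightarrow> (int \<times> int) set \<Rightarrow> bool" where
  "tiling_spectral_dual N A \<longleftrightarrow>
     (\<forall>B \<subseteq> grp N. tiling_pair N A B \<longrightarrow> symp_spectral_pair N B A) \<and>
     (\<forall>S \<subseteq> grp N. symp_spectral_pair N A S \<longrightarrow> tiling_pair N A S)"

end

theory Submission
  imports Defs "HOL-Computational_Algebra.Polynomial_Factorial"
begin


definition ee :: "nat \<Rightarrow> int \<Rightarrow> complex" where
  "ee N m = exp (2 * pi * \<i> * of_int m / of_nat N)"

lemma ee_add: "ee N (a + b) = ee N a * ee N b"
  unfolding ee_def by (simp add: exp_add[symmetric] distrib_left add_divide_distrib)

lemma ee_0 [simp]: "ee N 0 = 1"
  unfolding ee_def by simp

lemma ee_minus: "ee N (- a) = cnj (ee N a)"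
proof -
  have "cnj (2 * pi * \<i> * of_int a / of_nat N) = - (2 * pi * \<i> * of_int a / of_nat N)"
    by simp
  then show ?thesis unfolding ee_def by (simp add: exp_cnj)
qed

lemma ee_diff: "ee N (a - b) = ee N a * cnj (ee N b)"
  using ee_add[of N a "-b"] by (simp add: ee_minus)

lemma ee_norm [simp]: "norm (ee N a) = 1"
  unfolding ee_def by (simp add: norm_exp_eq_Re)

lemma ee_cnj_mult [simp]: "ee N a * cnj (ee N a) = 1"
  by (metis complex_norm_square ee_norm mult.commute of_real_1 power_one)

lemma ee_eq_1_iff:
  assumes "N > 0"
  shows "ee N m = 1 \<longleftrightarrow> int N dvd m"
proof -
  have "ee N m = 1 \<longleftrightarrow> (\<exists>n::int. 2 * pi * of_int m / of_nat N = of_int (2 * n) * pi)"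
    unfolding ee_def exp_eq_1 by (simp add: field_simps)
  also have "\<dots> \<longleftrightarrow> (\<exists>n::int. of_int m = of_int (n * int N) * (1::real))"
    using assms by (auto simp: field_simps)
  also have "\<dots> \<longleftrightarrow> int N dvd m"
    by (auto simp: dvd_def mult.commute simp del: of_int_mult)
  finally show ?thesis .
qed

lemma ee_cong:
  assumes "N > 0" "int N dvd (a - b)"
  shows "ee N a = ee N b"
proof -
  have "ee N (a - b) = 1" using assms ee_eq_1_iff by blast
  then have "ee N ((a - b) + b) = ee N b" by (simp only: ee_add) simp
  then show ?thesis by simp
qed

lemma ee_nat_power: "ee N (int k * a) = ee N a ^ k"
proof -
  have "2 * pi * \<i> * of_int (int k * a) / of_nat N = of_nat k * (2 * pi * \<i> * of_int a / (of_nat N :: complex))"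
    by simp
  then have "ee N (int k * a) = exp (of_nat k * (2 * pi * \<i> * of_int a / of_nat N))"
    unfolding ee_def by metis
  also have "\<dots> = ee N a ^ k" unfolding ee_def by (rule exp_of_nat_mult)
  finally show ?thesis .
qed

lemma ee_pow: "ee N 1 ^ k = ee N (int k)"
  using ee_nat_power[of N k 1] by simp


lemma prime_power_dvd_choose:
  fixes p k j :: nat
  assumes p: "prime p" and k: "k \<ge> 1" and j0: "0 < j" and jn: "j < p^k"
  shows "p dvd (p^k choose j)"
proof (rule ccontr)
  assume nd: "\<not> p dvd (p^k choose j)"
  obtain j' where j': "j = Suc j'" using j0 by (cases j) auto
  obtain n' where n': "p^k = Suc n'" using p by (cases "p^k") (auto simp: prime_gt_0_nat)
  have eq: "Suc n' * (n' choose j') = (Suc n' choose Suc j') * Suc j'"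
    by (rule Suc_times_binomial_eq)
  have "p^k dvd (p^k choose j) * j" using eq n' j' by (metis dvd_triv_left)
  moreover have "coprime (p^k) (p^k choose j)"
    using nd p by (simp add: coprime_power_left_iff prime_imp_coprime)
  ultimately have "p^k dvd j"
    by (metis coprime_dvd_mult_right_iff)
  then show False using j0 jn by (simp add: nat_dvd_not_less)
qed

lemma coeff_lin_power:
  "coeff ([:1,1:]^n :: int poly) j = int (n choose j)"
proof (induction n arbitrary: j)
  case 0
  then show ?case by (simp add: coeff_1)
next
  case (Suc n)
  have "[:1,1:]^(Suc n) = ([:1,1:]^n :: int poly) + pCons 0 ([:1,1:]^n)"
    by (simp add: algebra_simps)
  then have "coeff ([:1,1:]^(Suc n) :: int poly) j = coeff ([:1,1:]^n :: int poly) j + coeff (pCons 0 ([:1,1:]^n :: int poly)) j"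
    by simp
  also have "\<dots> = int (Suc n choose j)"
  proof (cases j)
    case 0 then show ?thesis using Suc by simp
  next
    case (Suc j') then show ?thesis using Suc.IH by simp
  qed
  finally show ?case .
qed

definition pdv :: "nat \<Rightarrow> int poly \<Rightarrow> bool" where
  "pdv p W \<longleftrightarrow> (\<forall>i. int p dvd coeff W i)"

lemma pdv_add: "pdv p A \<Longrightarrow> pdv p B \<Longrightarrow> pdv p (A + B)"
  by (auto simp: pdv_def)
lemma pdv_diff: "pdv p A \<Longrightarrow> pdv p B \<Longrightarrow> pdv p (A - B)"
  by (auto simp: pdv_def)
lemma pdv_mult: "pdv p A \<Longrightarrow> pdv p (B * A)"
  unfolding pdv_def coeff_mult by (simp add: dvd_sum)

lemma pdv_binom:
  assumes p: "prime p"
  shows "pdv p ([:1,1:]^(p^k) - 1 - monom 1 (p^k))"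
proof (cases "k = 0")
  case True
  then show ?thesis by (simp add: pdv_def monom_Suc one_pCons)
next
  case False
  show ?thesis unfolding pdv_def
  proof
    fix i
    have pk: "p^k > 0" using p by (simp add: prime_gt_0_nat)
    consider "i = 0" | "i = p^k" | "0 < i \<and> i < p^k" | "i > p^k" by linarith
    then show "int p dvd coeff ([:1,1:]^(p^k) - 1 - monom 1 (p^k)) i"
    proof cases
      case 1 then show ?thesis using pk by (simp add: coeff_lin_power coeff_monom)
    next
      case 2 then show ?thesis using pk by (simp add: coeff_lin_power coeff_monom coeff_1)
    next
      case 3
      then have "p dvd (p^k choose i)" using prime_power_dvd_choose[OF p, of k i] False by simp
      then show ?thesis using 3
        by (simp add: coeff_lin_power coeff_monom coeff_1)
    next
      case 4 then show ?thesis by (simp add: coeff_lin_power coeff_monom coeff_1 binomial_eq_0)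
    qed
  qed
qed

lemma eisenstein:
  fixes f g h :: "int poly" and p :: nat
  assumes p: "prime p" and fgh: "f = g * h"
    and dg: "degree g \<ge> 1" and dh: "degree h \<ge> 1"
    and lc: "\<not> int p dvd lead_coeff f"
    and low: "\<And>i. i < degree f \<Longrightarrow> int p dvd coeff f i"
    and c0: "\<not> (int p)^2 dvd coeff f 0"
  shows False
proof -
  have pi: "prime (int p)" using p by simp
  have g0: "g \<noteq> 0" and h0: "h \<noteq> 0" using dg dh by auto
  have degf: "degree f = degree g + degree h" using fgh g0 h0 by (simp add: degree_mult_eq)
  have key: "\<And>g h :: int poly. f = g * h \<Longrightarrow> degree g \<ge> 1 \<Longrightarrow> degree h \<ge> 1 \<Longrightarrow>
      int p dvd coeff g 0 \<Longrightarrow> False"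
  proof -
    fix g h :: "int poly"
    assume fgh: "f = g * h" and dg: "degree g \<ge> 1" and dh: "degree h \<ge> 1"
      and pg: "int p dvd coeff g 0"
    have g0: "g \<noteq> 0" and h0: "h \<noteq> 0" using dg dh by auto
    have degf: "degree f = degree g + degree h" using fgh g0 h0 by (simp add: degree_mult_eq)
    have "coeff f 0 = coeff g 0 * coeff h 0" using fgh by (simp add: coeff_mult)
    then have ph: "\<not> int p dvd coeff h 0" using pg c0
      by (metis mult_dvd_mono power2_eq_square)
    have all: "\<forall>j\<le>i. int p dvd coeff g j" if "i \<le> degree g" for i
      using that
    proof (induction i)
      case 0 then show ?case using pg by simp
    next
      case (Suc i)
      have IH: "\<forall>j\<le>i. int p dvd coeff g j" using Suc by simp
      have lt: "Suc i < degree f" using Suc.prems degf dh by linarith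
      have "coeff f (Suc i) = (\<Sum>j\<le>Suc i. coeff g j * coeff h (Suc i - j))"
        using fgh by (simp add: coeff_mult)
      also have "\<dots> = (\<Sum>j\<le>i. coeff g j * coeff h (Suc i - j)) + coeff g (Suc i) * coeff h 0"
        by simp
      finally have eq: "coeff g (Suc i) * coeff h 0 = coeff f (Suc i) - (\<Sum>j\<le>i. coeff g j * coeff h (Suc i - j))"
        by simp
      have "int p dvd coeff f (Suc i) - (\<Sum>j\<le>i. coeff g j * coeff h (Suc i - j))"
        using low[OF lt] IH by (intro dvd_diff dvd_sum) auto
      then have "int p dvd coeff g (Suc i) * coeff h 0" using eq by simp
      then have "int p dvd coeff g (Suc i)" using ph pi by (simp add: prime_dvd_mult_iff)
      then show ?case using IH le_Suc_eq by auto
    qed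
    then have "int p dvd lead_coeff g" by auto
    then have "int p dvd lead_coeff f" using fgh by (simp add: lead_coeff_mult)
    then show False using lc by simp
  qed
  have "int p dvd coeff f 0" using low dg degf by simp
  moreover have "coeff f 0 = coeff g 0 * coeff h 0" using fgh by (simp add: coeff_mult)
  ultimately have "int p dvd coeff g 0 \<or> int p dvd coeff h 0" using pi by (simp add: prime_dvd_mult_iff)
  then show False
  proof
    assume "int p dvd coeff g 0" then show False using key[OF fgh dg dh] by simp
  next
    assume "int p dvd coeff h 0" then show False using key[of h g] fgh dg dh by (simp add: mult.commute)
  qed
qed


definition Phi :: "nat \<Rightarrow> nat \<Rightarrow> int poly" where
  "Phi p m = (\<Sum>j<p. monom 1 (j*m))"

lemma Phi_mult: "Phi p m * (monom 1 m - 1) = monom 1 (p*m) - 1"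
proof -
  have "Phi p m * (monom 1 m - 1) = (\<Sum>j<p. monom 1 (Suc j * m) - monom 1 (j*m))"
    unfolding Phi_def sum_distrib_right
    by (intro sum.cong refl) (simp add: right_diff_distrib mult_monom add.commute)
  also have "\<dots> = monom 1 (p*m) - monom 1 (0*m)"
    by (rule sum_lessThan_telescope)
  finally show ?thesis by (simp add: monom_0 one_pCons)
qed

lemma coeff_Phi:
  assumes m: "m > 0"
  shows "coeff (Phi p m) i = (if m dvd i \<and> i div m < p then 1 else 0)"
proof -
  have "coeff (Phi p m) i = (\<Sum>j<p. if j*m = i then 1 else 0)"
    unfolding Phi_def coeff_sum by (simp add: coeff_monom)
  also have "\<dots> = (\<Sum>j<p. if j = i div m then (if m dvd i then 1 else 0) else 0)"
    using m by (intro sum.cong refl) auto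
  also have "\<dots> = (if m dvd i \<and> i div m < p then 1 else 0)"
    by (simp add: sum.delta)
  finally show ?thesis .
qed

lemma degree_Phi:
  assumes m: "m > 0" and p: "p > 0"
  shows "degree (Phi p m) = (p-1)*m" and "coeff (Phi p m) ((p-1)*m) = 1"
proof -
  show c: "coeff (Phi p m) ((p-1)*m) = 1" using m p by (simp add: coeff_Phi)
  have "degree (Phi p m) \<le> (p-1)*m"
  proof (rule degree_le, intro allI impI)
    fix i assume i: "(p-1)*m < i"
    show "coeff (Phi p m) i = 0"
    proof (cases "m dvd i")
      case True
      then obtain j where j: "i = m * j" by auto
      then have "(p-1) < j" using i m by (simp add: mult.commute)
      then show ?thesis using m j by (simp add: coeff_Phi)
    qed (simp add: coeff_Phi m)
  qed
  moreover have "(p-1)*m \<le> degree (Phi p m)" using c by (intro le_degree) simp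
  ultimately show "degree (Phi p m) = (p-1)*m" by simp
qed

lemma poly_Phi_1: "poly (Phi p m) 1 = int p"
  unfolding Phi_def by (simp add: poly_sum poly_monom)

definition FF :: "nat \<Rightarrow> nat \<Rightarrow> int poly" where
  "FF p m = pcompose (Phi p m) [:1,1:]"

lemma monom_pcompose: "pcompose (monom 1 n) [:1,1:] = ([:1,1:]^n :: int poly)"
proof -
  have "monom (1::int) n = [:0,1:]^n" by (simp add: monom_altdef)
  moreover have "pcompose (q^n) r = (pcompose q r)^n" for q r :: "int poly"
    by (induction n) (simp_all add: pcompose_mult pcompose_1)
  moreover have "pcompose [:0,1:] [:1,1:] = ([:1,1:] :: int poly)"
    by (simp add: pcompose_pCons)
  ultimately show ?thesis by simp
qed

lemma FF_mult: "FF p m * ([:1,1:]^m - 1) = [:1,1:]^(p*m) - 1"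
proof -
  have "pcompose (Phi p m * (monom 1 m - 1)) [:1,1:] = pcompose (monom 1 (p*m) - 1) [:1,1:]"
    by (simp add: Phi_mult)
  then show ?thesis unfolding FF_def by (simp add: pcompose_mult pcompose_diff monom_pcompose pcompose_1)
qed

lemma FF_props:
  fixes p k :: nat
  assumes p: "prime p"
  defines "m \<equiv> p^k"
  shows "degree (FF p m) = (p-1)*m" "lead_coeff (FF p m) = 1" "coeff (FF p m) 0 = int p"
    "\<And>i. i < (p-1)*m \<Longrightarrow> int p dvd coeff (FF p m) i"
proof -
  have p0: "p > 0" and m0: "m > 0" using p by (auto simp: m_def prime_gt_0_nat)
  show dF: "degree (FF p m) = (p-1)*m" unfolding FF_def by (simp add: degree_pcompose degree_Phi[OF m0 p0])
  show "lead_coeff (FF p m) = 1" unfolding FF_def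
    using degree_Phi[OF m0 p0] by (subst lead_coeff_comp) simp_all
  show "coeff (FF p m) 0 = int p" unfolding FF_def
    by (simp add: poly_0_coeff_0[symmetric] poly_pcompose poly_Phi_1)
  fix i assume i: "i < (p-1)*m"
  define D1 :: "int poly" where "D1 = [:1,1:]^m - 1 - monom 1 m"
  define D2 :: "int poly" where "D2 = [:1,1:]^(p*m) - 1 - monom 1 (p*m)"
  have pd1: "pdv p D1" unfolding D1_def m_def by (rule pdv_binom[OF p])
  have pd2: "pdv p D2" unfolding D2_def m_def using pdv_binom[OF p, of "Suc k"] by (simp add: power_Suc)
  have "FF p m * (monom 1 m + D1) = monom 1 (p*m) + D2"
    using FF_mult[of p m] by (simp add: D1_def D2_def)
  then have eq: "monom 1 m * FF p m = monom 1 (p*m) + (D2 - FF p m * D1)"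
    by (simp add: algebra_simps)
  have "coeff (monom 1 m * FF p m) (i + m) = coeff (FF p m) i"
    by (simp add: coeff_monom_mult)
  moreover have "coeff (monom 1 (p*m)) (i + m) = (0::int)"
  proof -
    have "i + m < p * m" using i p0 m0
      by (metis Suc_diff_1 add.commute add_less_cancel_left mult_Suc)
    then show ?thesis by (simp add: coeff_monom)
  qed
  moreover have "pdv p (D2 - FF p m * D1)" using pd1 pd2 by (intro pdv_diff pdv_mult)
  ultimately show "int p dvd coeff (FF p m) i" using eq unfolding pdv_def
    by (metis add_0 coeff_add)
qed


abbreviation ci :: "int poly \<Rightarrow> complex poly" where
  "ci P \<equiv> map_poly of_int P"

lemma ci_mult: "ci (P * Q) = ci P * ci Q"
  by (rule poly_eqI) (simp add: coeff_map_poly coeff_mult)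
lemma ci_add: "ci (P + Q) = ci P + ci Q"
  by (rule poly_eqI) (simp add: coeff_map_poly)
lemma ci_diff: "ci (P - Q) = ci P - ci Q"
  by (rule poly_eqI) (simp add: coeff_map_poly)
lemma ci_smult: "ci (smult a P) = smult (of_int a) (ci P)"
  by (rule poly_eqI) (simp add: coeff_map_poly)
lemma ci_monom: "ci (monom a n) = monom (of_int a) n"
  by (simp add: map_poly_monom)
lemma ci_1: "ci 1 = 1" by simp
lemma ci_sum: "ci (\<Sum>k\<in>A. f k) = (\<Sum>k\<in>A. ci (f k))"
  by (induction A rule: infinite_finite_induct) (simp_all add: ci_add)

lemma smult_cancel_int: "(a::int) \<noteq> 0 \<Longrightarrow> smult a X = smult a Y \<Longrightarrow> X = Y"
  by (metis smult_eq_0_iff smult_diff_right right_minus_eq)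

lemma content_Phi:
  assumes "prime p" "m > 0"
  shows "content (Phi p m) = 1"
proof -
  have p0: "p > 0" using assms prime_gt_0_nat by blast
  have "content (Phi p m) dvd coeff (Phi p m) ((p-1)*m)" by (rule content_dvd_coeff)
  have c1: "coeff (Phi p m) ((p-1)*m) = 1" using degree_Phi(2)[OF assms(2) p0] .
  have d: "content (Phi p m) dvd 1" by (metis c1 content_dvd_coeff)
  have "normalize (content (Phi p m)) = content (Phi p m)" by (rule normalize_content)
  then have "content (Phi p m) \<ge> 0" by (metis abs_ge_zero normalize_int_def)
  then show ?thesis using d by (simp add: zdvd1_eq)
qed

lemma omega_props:
  assumes p: "prime p" and m: "m > 0"
  shows "ee (p*m) 1 ^ (p*m) = 1" "ee (p*m) 1 ^ m \<noteq> 1"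
proof -
  have p2: "p \<ge> 2" using p prime_ge_2_nat by blast
  have pm: "p*m > 0" using p2 m by simp
  show "ee (p*m) 1 ^ (p*m) = 1" by (simp add: ee_pow ee_eq_1_iff[OF pm])
  have "\<not> int (p*m) dvd int m"
  proof
    assume "int (p*m) dvd int m"
    then have "p*m dvd m" by (simp only: int_dvd_int_iff)
    then have "p*m \<le> m" using m by (simp add: dvd_imp_le)
    then show False using p2 m by simp
  qed
  then show "ee (p*m) 1 ^ m \<noteq> 1" by (simp add: ee_pow ee_eq_1_iff[OF pm])
qed

lemma poly_Phi_omega:
  assumes p: "prime p" and m: "m > 0"
  shows "poly (ci (Phi p m)) (ee (p*m) 1) = 0"
proof -
  let ?w = "ee (p*m) 1"
  have "ci (Phi p m * (monom 1 m - 1)) = ci (monom 1 (p*m) - 1)" by (simp add: Phi_mult)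
  then have "ci (Phi p m) * (monom 1 m - 1) = monom 1 (p*m) - 1"
    by (simp add: ci_mult ci_diff ci_monom)
  then have "poly (ci (Phi p m)) ?w * (?w^m - 1) = ?w^(p*m) - 1"
    by (metis poly_1 poly_diff poly_monom poly_mult mult_1)
  then have "poly (ci (Phi p m)) ?w * (?w^m - 1) = 0" using omega_props[OF p m] by simp
  then show ?thesis using omega_props(2)[OF p m] by simp
qed

lemma mindeg:
  fixes p k :: nat and P :: "int poly"
  assumes p: "prime p" and mdef: "m = p^k" and P0: "P \<noteq> 0"
    and Pw: "poly (ci P) (ee (p*m) 1) = 0"
  shows "degree P \<ge> (p-1)*m"
proof (rule ccontr)
  assume small: "\<not> degree P \<ge> (p-1)*m"
  let ?w = "ee (p*m) 1"
  have p0: "p > 0" and m0: "m > 0" using p mdef by (auto simp: prime_gt_0_nat)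
  define S where "S = {P :: int poly. P \<noteq> 0 \<and> poly (ci P) ?w = 0}"
  have PS: "P \<in> S" using P0 Pw by (simp add: S_def)
  define d0 where "d0 = (LEAST d. \<exists>T\<in>S. degree T = d)"
  have "\<exists>T\<in>S. degree T = d0" unfolding d0_def by (rule LeastI_ex) (use PS in blast)
  then obtain T where TS: "T \<in> S" and dT: "degree T = d0" by blast
  have minimal: "\<And>T'. T' \<in> S \<Longrightarrow> d0 \<le> degree T'"
    unfolding d0_def by (rule Least_le) blast
  have d0P: "d0 < (p-1)*m" using minimal[OF PS] small by simp
  define T' where "T' = primitive_part T"
  have T0: "T \<noteq> 0" and Tw: "poly (ci T) ?w = 0" using TS by (auto simp: S_def)
  have T'0: "T' \<noteq> 0" using T0 by (simp add: T'_def)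
  have "ci T = smult (of_int (content T)) (ci T')"
    by (metis T'_def ci_smult content_times_primitive_part)
  then have "of_int (content T) * poly (ci T') ?w = 0" using Tw by simp
  then have T'w: "poly (ci T') ?w = 0" using T0 by simp
  have dT': "degree T' = d0" using dT by (simp add: T'_def)
  have cT': "content T' = 1" using T0 by (simp add: T'_def)
  have T'S: "T' \<in> S" using T'0 T'w by (simp add: S_def)
  define R where "R = pseudo_mod (Phi p m) T'"
  obtain a Q where a0: "a \<noteq> 0" and eqR: "smult a (Phi p m) = T' * Q + R"
    using pseudo_mod(1)[OF T'0, of "Phi p m"] unfolding R_def by blast
  have dR: "R = 0 \<or> degree R < degree T'"
    using pseudo_mod(2)[OF T'0, of "Phi p m"] unfolding R_def by blast
  have "ci R = smult (of_int a) (ci (Phi p m)) - ci T' * ci Q"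
    using arg_cong[OF eqR, of ci] by (simp add: ci_smult ci_add ci_mult)
  then have Rw: "poly (ci R) ?w = 0" using T'w poly_Phi_omega[OF p m0] by simp
  have R0: "R = 0"
  proof (rule ccontr)
    assume "R \<noteq> 0"
    then have "R \<in> S" using Rw by (simp add: S_def)
    then have "d0 \<le> degree R" by (rule minimal)
    then show False using dR dT' \<open>R \<noteq> 0\<close> by simp
  qed
  have eq: "smult a (Phi p m) = T' * Q" using eqR R0 by simp
  have "content (smult a (Phi p m)) = \<bar>a\<bar>" using content_Phi[OF p m0] by simp
  moreover have "content (T' * Q) = content Q" by (simp add: content_mult cT')
  ultimately have cQ: "content Q = \<bar>a\<bar>" using eq by simp
  define Q' where "Q' = primitive_part Q"
  have "Q = smult \<bar>a\<bar> Q'" unfolding Q'_def by (metis cQ content_times_primitive_part)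
  then have "smult a (Phi p m) = smult \<bar>a\<bar> (T' * Q')" using eq by simp
  also have "\<dots> = smult a (smult (sgn a) (T' * Q'))"
    by (simp add: abs_sgn mult.commute)
  finally have "Phi p m = smult (sgn a) (T' * Q')" using smult_cancel_int[OF a0] by blast
  then have fac: "Phi p m = T' * smult (sgn a) Q'" by simp
  define G where "G = smult (sgn a) Q'"
  have Phi0: "Phi p m \<noteq> 0" using degree_Phi(2)[OF m0 p0] by auto
  have G0: "G \<noteq> 0" using fac Phi0 G_def by auto
  have degsum: "(p-1)*m = d0 + degree G"
    using fac degree_mult_eq[OF T'0 G0] degree_Phi(1)[OF m0 p0] dT' G_def by simp
  have dG: "degree G \<ge> 1" using degsum d0P by simp
  have dT'1: "degree T' \<ge> 1"
  proof (rule ccontr)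
    assume "\<not> degree T' \<ge> 1"
    then have "degree T' = 0" by simp
    then have "T' = [:coeff T' 0:]" by (metis degree_0_id)
    then have "ci T' = [:of_int (coeff T' 0):]" by (metis map_poly_pCons map_poly_0 of_int_0 pCons_0_0)
    then have "poly (ci T') ?w = of_int (coeff T' 0)" by simp
    moreover have "coeff T' 0 \<noteq> 0" using T'0 \<open>T' = [:coeff T' 0:]\<close> by (metis pCons_0_0)
    ultimately show False using T'w by simp
  qed
  have FFfac: "FF p m = pcompose T' [:1,1:] * pcompose G [:1,1:]"
  proof -
    have "Phi p m = T' * G" using fac G_def by simp
    then show ?thesis unfolding FF_def by (simp only: pcompose_mult)
  qed
  show False
  proof (rule eisenstein[OF p FFfac])
    show "degree (pcompose T' [:1,1:]) \<ge> 1" using dT'1 by (simp add: degree_pcompose)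
    show "degree (pcompose G [:1,1:]) \<ge> 1" using dG by (simp add: degree_pcompose)
    have "lead_coeff (FF p m) = 1" using FF_props(2)[OF p] mdef by simp
    moreover have "p \<noteq> 1" using p by auto
    ultimately show "\<not> int p dvd lead_coeff (FF p m)" by simp
    show "\<And>i. i < degree (FF p m) \<Longrightarrow> int p dvd coeff (FF p m) i"
      using FF_props(1,4)[OF p] mdef by simp
    have "coeff (FF p m) 0 = int p" using FF_props(3)[OF p] mdef by simp
    moreover have "\<not> (int p)^2 dvd int p"
    proof
      assume "(int p)^2 dvd int p"
      then have "p^2 dvd p" by (metis of_nat_dvd_iff of_nat_power)
      then have "p^2 \<le> p" using p0 by (simp add: dvd_imp_le)
      then show False using prime_ge_2_nat[OF p] by (simp add: power2_eq_square)
    qed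
    ultimately show "\<not> (int p)^2 dvd coeff (FF p m) 0" by simp
  qed
qed


lemma periodic:
  fixes p k :: nat and c :: "nat \<Rightarrow> nat"
  assumes p: "prime p" and mdef: "m = p^k"
    and sum0: "(\<Sum>i<p*m. of_nat (c i) * ee (p*m) 1 ^ i) = 0"
    and j: "j + m < p*m"
  shows "c j = c (j + m)"
proof -
  let ?w = "ee (p*m) 1"
  have p0: "p > 0" and m0: "m > 0" using p mdef by (auto simp: prime_gt_0_nat)
  define P where "P = (\<Sum>i<p*m. monom (int (c i)) i)"
  have cP: "coeff P i = (if i < p*m then int (c i) else 0)" for i
    unfolding P_def coeff_sum by (simp add: coeff_monom sum.delta)
  have "ci P = (\<Sum>i<p*m. monom (of_nat (c i)) i)"
    unfolding P_def ci_sum by (simp add: ci_monom)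
  then have Pw: "poly (ci P) ?w = 0" using sum0 by (simp add: poly_sum poly_monom)
  have Phi0: "Phi p m \<noteq> 0" using degree_Phi(2)[OF m0 p0] by auto
  have lcPhi: "lead_coeff (Phi p m) = 1" using degree_Phi[OF m0 p0] by simp
  obtain Q R where qr: "pseudo_divmod P (Phi p m) = (Q, R)" by (cases "pseudo_divmod P (Phi p m)")
  have eq: "P = Phi p m * Q + R"
    using pseudo_divmod(1)[OF Phi0 qr] lcPhi by simp
  have dR: "R = 0 \<or> degree R < degree (Phi p m)" using pseudo_divmod(2)[OF Phi0 qr] .
  have "ci R = ci P - ci (Phi p m) * ci Q"
    using arg_cong[OF eq, of ci] by (simp add: ci_add ci_mult)
  then have Rw: "poly (ci R) ?w = 0" using Pw poly_Phi_omega[OF p m0] by simp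
  have R0: "R = 0"
  proof (rule ccontr)
    assume "R \<noteq> 0"
    then have "degree R \<ge> (p-1)*m" using mindeg[OF p mdef _ Rw] by simp
    then show False using dR degree_Phi(1)[OF m0 p0] \<open>R \<noteq> 0\<close> by simp
  qed
  have PQ: "P = Phi p m * Q" using eq R0 by simp
  have key: "(monom 1 m - 1) * P = (monom 1 (p*m) - 1) * Q"
  proof -
    have "(monom 1 m - 1) * P = Q * (Phi p m * (monom 1 m - 1))" using PQ by (simp add: algebra_simps)
    also have "\<dots> = (monom 1 (p*m) - 1) * Q" by (simp only: Phi_mult mult.commute)
    finally show ?thesis .
  qed
  have cQ: "coeff Q (j + m) = 0"
  proof (cases "Q = 0")
    case True then show ?thesis by simp
  next
    case False
    have "degree P \<le> p*m - 1"
      by (rule degree_le) (auto simp: cP)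
    moreover have "degree P = (p-1)*m + degree Q"
      using PQ degree_mult_eq[OF Phi0 False] degree_Phi(1)[OF m0 p0] by simp
    moreover have "p*m = (p-1)*m + m" using p0 by (metis Suc_diff_1 add.commute mult_Suc)
    ultimately have "degree Q < m" using m0 by linarith
    then show ?thesis by (simp add: coeff_eq_0)
  qed
  have "coeff ((monom 1 m - 1) * P) (j + m) = int (c j) - int (c (j + m))"
    using j by (simp add: left_diff_distrib coeff_monom_mult cP)
  moreover have "coeff ((monom 1 (p*m) - 1) * Q) (j + m) = 0"
    using j cQ by (simp add: left_diff_distrib coeff_monom_mult)
  ultimately show ?thesis using key by simp
qed


lemma ee_mod: "q > 0 \<Longrightarrow> ee q (a mod int q) = ee q a"
  by (rule ee_cong) (auto simp: mod_eq_dvd_iff[symmetric] mod_mod_trivial)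

lemma group_sum:
  assumes q: "q > 0" and X: "finite X"
  shows "(\<Sum>x\<in>X. ee q (f x)) = (\<Sum>i<q. of_nat (card {x\<in>X. f x mod int q = int i}) * ee q 1 ^ i)"
proof -
  have "(\<Sum>x\<in>X. ee q (f x)) = (\<Sum>x\<in>X. ee q 1 ^ nat (f x mod int q))"
  proof (intro sum.cong refl)
    fix x
    have "ee q 1 ^ nat (f x mod int q) = ee q (int (nat (f x mod int q)))" by (rule ee_pow)
    also have "\<dots> = ee q (f x mod int q)" using q by simp
    also have "\<dots> = ee q (f x)" using ee_mod[OF q] .
    finally show "ee q (f x) = ee q 1 ^ nat (f x mod int q)" by simp
  qed
  also have "\<dots> = (\<Sum>i<q. \<Sum>x\<in>{x\<in>X. nat (f x mod int q) = i}. ee q 1 ^ nat (f x mod int q))"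
    using X q by (intro sum.group[symmetric]) (auto simp: nat_less_iff)
  also have "\<dots> = (\<Sum>i<q. of_nat (card {x\<in>X. f x mod int q = int i}) * ee q 1 ^ i)"
  proof (intro sum.cong refl)
    fix i
    have s: "{x\<in>X. nat (f x mod int q) = i} = {x\<in>X. f x mod int q = int i}"
      using q by auto
    show "(\<Sum>x\<in>{x\<in>X. nat (f x mod int q) = i}. ee q 1 ^ nat (f x mod int q)) =
        of_nat (card {x\<in>X. f x mod int q = int i}) * ee q 1 ^ i"
      unfolding s by simp
  qed
  finally show ?thesis .
qed

lemma card_fibers:
  assumes q: "q > 0" and X: "finite X"
  shows "(\<Sum>i<q. card {x\<in>X. f x mod int q = int i}) = card X"
proof -
  have "card X = (\<Sum>x\<in>X. 1::nat)" by simp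
  also have "\<dots> = (\<Sum>i<q. \<Sum>x\<in>{x\<in>X. nat (f x mod int q) = i}. 1)"
    using X q by (intro sum.group[symmetric]) (auto simp: nat_less_iff)
  also have "\<dots> = (\<Sum>i<q. card {x\<in>X. f x mod int q = int i})"
  proof (intro sum.cong refl)
    fix i
    have s: "{x\<in>X. nat (f x mod int q) = i} = {x\<in>X. f x mod int q = int i}"
      using q by auto
    show "(\<Sum>x\<in>{x\<in>X. nat (f x mod int q) = i}. 1) = card {x\<in>X. f x mod int q = int i}"
      unfolding s by simp
  qed
  finally show ?thesis by simp
qed

lemma fiber_ge2:
  assumes X: "finite X" and a: "a \<in> X" "a' \<in> X" "a \<noteq> a'" "f a = f a'" and q: "q > 0"
  shows "card {x\<in>X. f x mod int q = int (nat (f a mod int q))} \<ge> 2"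
proof -
  have "{a, a'} \<subseteq> {x\<in>X. f x mod int q = int (nat (f a mod int q))}"
    using a q by auto
  moreover have "finite {x\<in>X. f x mod int q = int (nat (f a mod int q))}" using X by simp
  ultimately have "card {a, a'} \<le> card {x\<in>X. f x mod int q = int (nat (f a mod int q))}"
    by (rule card_mono[rotated])
  then show ?thesis using a by simp
qed

lemma RUp:
  fixes p :: nat and X :: "'a set"
  assumes p: "prime p" and X: "finite X" and cX: "card X = p"
    and a: "a \<in> X" "a' \<in> X" "a \<noteq> a'" "f a = f a'"
  shows "(\<Sum>x\<in>X. ee p (f x)) \<noteq> 0"
proof
  assume s0: "(\<Sum>x\<in>X. ee p (f x)) = 0"
  have p0: "p > 0" using p prime_gt_0_nat by blast
  define c where "c i = card {x\<in>X. f x mod int p = int i}" for i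
  have "(\<Sum>i<p*1. of_nat (c i) * ee (p*1) 1 ^ i) = 0"
    using s0 group_sum[OF p0 X, of f] by (simp add: c_def)
  then have per: "\<And>j. j + 1 < p*1 \<Longrightarrow> c j = c (j + 1)"
    using periodic[OF p, where m=1 and k=0 and c=c] by simp
  have const: "j < p \<Longrightarrow> c j = c 0" for j
  proof (induction j)
    case (Suc j) then show ?case using per[of j] by simp
  qed simp
  have "(\<Sum>i<p. c i) = card X" unfolding c_def by (rule card_fibers[OF p0 X])
  then have "(\<Sum>i<p. c i) = p" using cX by simp
  moreover have "(\<Sum>i<p. c i) = (\<Sum>i<p. c 0)" by (rule sum.cong) (auto intro: const)
  moreover have "(\<Sum>i<p. c 0) = p * c 0" by simp
  ultimately have c01: "c 0 = 1" using p0 by simp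
  have "c (nat (f a mod int p)) \<ge> 2" unfolding c_def by (rule fiber_ge2[OF X a p0])
  moreover have "nat (f a mod int p) < p" using p0 by (simp add: nat_less_iff)
  ultimately have "c (nat (f a mod int p)) = 1" using const c01 by metis
  with \<open>c (nat (f a mod int p)) \<ge> 2\<close> show False by simp
qed

lemma RUp2:
  fixes p :: nat and X :: "'a set"
  assumes p: "prime p" and X: "finite X"
    and bound: "\<And>r. card {x\<in>X. f x mod int p = r} \<le> p"
    and a: "a \<in> X" "a' \<in> X" "a \<noteq> a'" "f a = f a'"
  shows "(\<Sum>x\<in>X. ee (p^2) (f x)) \<noteq> 0"
proof
  assume s0: "(\<Sum>x\<in>X. ee (p^2) (f x)) = 0"
  have p0: "p > 0" using p prime_gt_0_nat by blast
  have q0: "p^2 > 0" using p0 by simp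
  define c where "c i = card {x\<in>X. f x mod int (p^2) = int i}" for i
  have "(\<Sum>i<p*p. of_nat (c i) * ee (p*p) 1 ^ i) = 0"
    using s0 group_sum[OF q0 X, of f] by (simp add: c_def power2_eq_square)
  then have per: "\<And>j. j + p < p*p \<Longrightarrow> c j = c (j + p)"
    using periodic[OF p, where m=p and k=1 and c=c] by simp
  have shift: "r + t*p < p*p \<Longrightarrow> c (r + t*p) = c r" for r t
  proof (induction t)
    case (Suc t)
    have "r + t*p + p < p*p" using Suc.prems by (simp add: algebra_simps)
    then have "c (r + t*p) = c (r + t*p + p)" using per by blast
    moreover have "r + t*p < p*p" using Suc.prems by simp
    ultimately show ?case using Suc.IH by (simp add: algebra_simps)
  qed simp
  define j where "j = nat (f a mod int (p^2))"
  have j2: "c j \<ge> 2" unfolding c_def j_def by (rule fiber_ge2[OF X a q0])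
  have jlt: "j < p*p" using q0 by (simp add: j_def nat_less_iff power2_eq_square)
  define r where "r = j mod p"
  have rlt: "r < p" using p0 by (simp add: r_def)
  have cr: "c r = c j"
  proof -
    have "j = r + (j div p) * p" by (simp add: r_def)
    then show ?thesis using shift[of r "j div p"] jlt by simp
  qed
  define Fb where "Fb t = {x\<in>X. f x mod int (p^2) = int (r + t*p)}" for t
  have cardFb: "t < p \<Longrightarrow> card (Fb t) = c j" for t
  proof -
    assume t: "t < p"
    have "r + t*p < p*p"
    proof -
      have "r + t*p < p + t*p" using rlt by simp
      also have "\<dots> = Suc t * p" by simp
      also have "\<dots> \<le> p*p" using t by (intro mult_le_mono1) simp
      finally show ?thesis .
    qed
    then show ?thesis using shift[of r t] cr by (simp add: Fb_def c_def)
  qed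
  have sub: "(\<Union>t<p. Fb t) \<subseteq> {x\<in>X. f x mod int p = int r}"
  proof
    fix x assume "x \<in> (\<Union>t<p. Fb t)"
    then obtain t where t: "t < p" "x \<in> X" "f x mod int (p^2) = int (r + t*p)" by (auto simp: Fb_def)
    have "f x mod int p = (f x mod int (p^2)) mod int p"
      by (simp add: mod_mod_cancel power2_eq_square)
    also have "\<dots> = int (r + t*p) mod int p" using t by simp
    also have "\<dots> = int r" using rlt by (simp add: zmod_int[symmetric])
    finally show "x \<in> {x\<in>X. f x mod int p = int r}" using t by simp
  qed
  have disj: "\<forall>t\<in>{..<p}. \<forall>t'\<in>{..<p}. t \<noteq> t' \<longrightarrow> Fb t \<inter> Fb t' = {}"
    by (auto simp: Fb_def)
  have "card (\<Union>t<p. Fb t) = (\<Sum>t<p. card (Fb t))"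
    using X by (intro card_UN_disjoint) (auto simp: Fb_def disj)
  also have "\<dots> = p * c j" using cardFb by simp
  moreover have "card (\<Union>t<p. Fb t) \<le> card {x\<in>X. f x mod int p = int r}"
    by (rule card_mono) (use X sub in auto)
  ultimately have "p * c j \<le> card {x\<in>X. f x mod int p = int r}" by simp
  also have "\<dots> \<le> p" by (rule bound)
  finally have "c j \<le> 1" using p0 by simp
  then show False using j2 by simp
qed


lemma dual_ortho:
  fixes ch :: "'a \<Rightarrow> 'b \<Rightarrow> complex"
  assumes X: "finite X" and Y: "finite Y" and cXY: "card X = card Y"
    and unit: "\<And>s b. ch s b * cnj (ch s b) = 1"
    and ortho: "\<And>s t. s \<in> X \<Longrightarrow> t \<in> X \<Longrightarrow> s \<noteq> t \<Longrightarrow> (\<Sum>b\<in>Y. ch s b * cnj (ch t b)) = 0"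
    and b0: "b0 \<in> Y" and b1: "b1 \<in> Y" and ne: "b1 \<noteq> b0"
  shows "(\<Sum>s\<in>X. ch s b1 * cnj (ch s b0)) = 0"
proof -
  define K where "K b = (\<Sum>s\<in>X. ch s b * cnj (ch s b0))" for b
  have O: "(\<Sum>b\<in>Y. ch s b * cnj (ch t b)) = (if s = t then of_nat (card Y) else 0)"
    if "s \<in> X" "t \<in> X" for s t
    using ortho[OF that] unit by auto
  have "(\<Sum>b\<in>Y. K b * cnj (K b)) =
      (\<Sum>b\<in>Y. \<Sum>s\<in>X. \<Sum>t\<in>X. (ch s b * cnj (ch s b0)) * (cnj (ch t b) * ch t b0))"
    unfolding K_def by (simp add: sum_product cnj_sum)
  also have "\<dots> = (\<Sum>s\<in>X. \<Sum>b\<in>Y. \<Sum>t\<in>X. (ch s b * cnj (ch s b0)) * (cnj (ch t b) * ch t b0))"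
    by (rule sum.swap)
  also have "\<dots> = (\<Sum>s\<in>X. \<Sum>t\<in>X. \<Sum>b\<in>Y. (ch s b * cnj (ch s b0)) * (cnj (ch t b) * ch t b0))"
    by (intro sum.cong refl sum.swap)
  also have "\<dots> = (\<Sum>s\<in>X. \<Sum>t\<in>X. (cnj (ch s b0) * ch t b0) * (\<Sum>b\<in>Y. ch s b * cnj (ch t b)))"
    by (intro sum.cong refl) (simp add: sum_distrib_left mult_ac)
  also have "\<dots> = (\<Sum>s\<in>X. \<Sum>t\<in>X. if t = s then (cnj (ch s b0) * ch s b0) * of_nat (card Y) else 0)"
    by (intro sum.cong refl) (auto simp: O)
  also have "\<dots> = (\<Sum>s\<in>X. of_nat (card Y))"
    using X by (simp add: sum.delta' unit mult.commute)
  also have "\<dots> = of_nat (card X * card Y)" by simp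
  finally have tot: "(\<Sum>b\<in>Y. K b * cnj (K b)) = of_nat (card X * card Y)" .
  have Kcm: "K b * cnj (K b) = of_real ((cmod (K b))^2)" for b
    by (metis complex_norm_square)
  have "K b0 = of_nat (card X)" unfolding K_def using unit by simp
  then have Kb0: "(cmod (K b0))^2 = real (card X) ^ 2" by simp
  have "(\<Sum>b\<in>Y. (cmod (K b))^2) = real (card X * card Y)"
  proof -
    have "of_real (\<Sum>b\<in>Y. (cmod (K b))^2) = (of_nat (card X * card Y) :: complex)"
      using tot by (simp add: Kcm)
    then show ?thesis by (metis of_real_eq_iff of_real_of_nat_eq)
  qed
  moreover have "(\<Sum>b\<in>Y. (cmod (K b))^2) = (cmod (K b0))^2 + (\<Sum>b\<in>Y-{b0}. (cmod (K b))^2)"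
    using Y b0 by (simp add: sum.remove)
  ultimately have "(\<Sum>b\<in>Y-{b0}. (cmod (K b))^2) = 0"
    using Kb0 cXY by (simp add: power2_eq_square)
  then have "\<forall>b\<in>Y-{b0}. (cmod (K b))^2 = 0"
    using Y by (subst sum_nonneg_eq_0_iff[symmetric]) auto
  then have "(cmod (K b1))^2 = 0" using b1 ne by simp
  then show ?thesis by (simp add: K_def)
qed


lemma schar_ee: "schar N s a = ee N (symp a s)"
  unfolding schar_def ee_def ..

lemma schar_unit: "schar N s a * cnj (schar N s a) = 1"
  by (simp add: schar_ee)

lemma grp_finite [simp]: "finite (grp N)"
  unfolding grp_def by simp

lemma SP_build:
  assumes Y: "Y \<subseteq> grp N" and X: "X \<subseteq> grp N" and cXY: "card X = card Y"
    and ortho: "\<forall>s\<in>X. \<forall>t\<in>X. s \<noteq> t \<longrightarrow> (\<Sum>b\<in>Y. schar N s b * cnj (schar N t b)) = 0"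
  shows "symp_spectral_pair N Y X"
proof -
  have fX: "finite X" and fY: "finite Y" using X Y grp_finite finite_subset by metis+
  have O: "(\<Sum>b\<in>Y. schar N s b * cnj (schar N t b)) = (if s = t then of_nat (card Y) else 0)"
    if "s \<in> X" "t \<in> X" for s t
    using ortho that schar_unit by auto
  have D: "(\<Sum>s\<in>X. schar N s b * cnj (schar N s b')) = (if b = b' then of_nat (card X) else 0)"
    if "b \<in> Y" "b' \<in> Y" for b b'
  proof (cases "b = b'")
    case True then show ?thesis by (simp add: schar_unit)
  next
    case False
    then show ?thesis using dual_ortho[OF fX fY cXY, of "schar N" b' b] schar_unit ortho that by auto
  qed
  have indep: "\<forall>s\<in>X. c s = 0" if H: "\<forall>b\<in>Y. (\<Sum>s\<in>X. c s * schar N s b) = 0" for c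
  proof
    fix t assume t: "t \<in> X"
    have "0 = (\<Sum>b\<in>Y. (\<Sum>s\<in>X. c s * schar N s b) * cnj (schar N t b))" using H by simp
    also have "\<dots> = (\<Sum>b\<in>Y. \<Sum>s\<in>X. c s * (schar N s b * cnj (schar N t b)))"
      by (simp add: sum_distrib_right mult.assoc)
    also have "\<dots> = (\<Sum>s\<in>X. \<Sum>b\<in>Y. c s * (schar N s b * cnj (schar N t b)))"
      by (rule sum.swap)
    also have "\<dots> = (\<Sum>s\<in>X. c s * (\<Sum>b\<in>Y. schar N s b * cnj (schar N t b)))"
      by (simp add: sum_distrib_left)
    also have "\<dots> = (\<Sum>s\<in>X. if s = t then c t * of_nat (card Y) else 0)"
      by (intro sum.cong refl) (auto simp: O t)
    also have "\<dots> = c t * of_nat (card Y)" using fX t by simp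
    finally have "c t * of_nat (card Y) = 0" by simp
    moreover have "card Y > 0" using cXY fX t card_gt_0_iff by fastforce
    ultimately show "c t = 0" by simp
  qed
  have span: "\<exists>c. \<forall>b\<in>Y. f b = (\<Sum>s\<in>X. c s * schar N s b)" for f :: "int \<times> int \<Rightarrow> complex"
  proof -
    define c where "c s = (\<Sum>b'\<in>Y. f b' * cnj (schar N s b')) / of_nat (card X)" for s
    have "f b = (\<Sum>s\<in>X. c s * schar N s b)" if b: "b \<in> Y" for b
    proof -
      have cX0: "card X > 0" using cXY fY b card_gt_0_iff by fastforce
      have "(\<Sum>s\<in>X. c s * schar N s b) =
          (\<Sum>b'\<in>Y. f b' * (\<Sum>s\<in>X. schar N s b * cnj (schar N s b'))) / of_nat (card X)"
      proof -
        have "(\<Sum>s\<in>X. c s * schar N s b) = (\<Sum>s\<in>X. \<Sum>b'\<in>Y. f b' * (schar N s b * cnj (schar N s b')) / of_nat (card X))"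
          unfolding c_def sum_divide_distrib sum_distrib_right by (intro sum.cong refl) (simp add: field_simps)
        also have "\<dots> = (\<Sum>b'\<in>Y. \<Sum>s\<in>X. f b' * (schar N s b * cnj (schar N s b')) / of_nat (card X))"
          by (rule sum.swap)
        also have "\<dots> = (\<Sum>b'\<in>Y. f b' * (\<Sum>s\<in>X. schar N s b * cnj (schar N s b'))) / of_nat (card X)"
          by (simp add: sum_divide_distrib sum_distrib_left)
        finally show ?thesis .
      qed
      also have "\<dots> = (\<Sum>b'\<in>Y. if b' = b then f b * of_nat (card X) else 0) / of_nat (card X)"
        by (intro arg_cong[where f="\<lambda>z. z / _"] sum.cong refl) (auto simp: D b)
      also have "\<dots> = f b" using fY b cX0 by simp
      finally show ?thesis by simp
    qed
    then show ?thesis by blast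
  qed
  show ?thesis unfolding symp_spectral_pair_def using Y X ortho indep span by blast
qed

lemma SP_card:
  assumes sp: "symp_spectral_pair N A S" and a0: "a0 \<in> A"
  shows "card S = card A"
proof -
  have A: "A \<subseteq> grp N" and S: "S \<subseteq> grp N" using sp by (auto simp: symp_spectral_pair_def)
  have fA: "finite A" and fS: "finite S" using A S grp_finite finite_subset by metis+
  have ortho: "\<forall>s\<in>S. \<forall>t\<in>S. s \<noteq> t \<longrightarrow> (\<Sum>a\<in>A. schar N s a * cnj (schar N t a)) = 0"
    using sp by (simp add: symp_spectral_pair_def)
  have O: "(\<Sum>a\<in>A. schar N s a * cnj (schar N t a)) = (if s = t then of_nat (card A) else 0)"
    if "s \<in> S" "t \<in> S" for s t
    using ortho that schar_unit by auto
  define f :: "int \<times> int \<Rightarrow> complex" where "f a = (if a = a0 then 1 else 0)" for a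
  have spanA: "\<forall>f :: int \<times> int \<Rightarrow> complex. \<exists>c :: int \<times> int \<Rightarrow> complex. \<forall>a\<in>A. f a = (\<Sum>s\<in>S. c s * schar N s a)"
    using sp unfolding symp_spectral_pair_def by (elim conjE)
  obtain c where c: "\<forall>a\<in>A. f a = (\<Sum>s\<in>S. c s * schar N s a)"
    using spec[OF spanA, of f] by (elim exE)
  have cA0: "card A > 0" using fA a0 card_gt_0_iff by fastforce
  have ct: "c t = cnj (schar N t a0) / of_nat (card A)" if t: "t \<in> S" for t
  proof -
    have "cnj (schar N t a0) = (\<Sum>a\<in>A. f a * cnj (schar N t a))"
    proof -
      have "(\<Sum>a\<in>A. f a * cnj (schar N t a)) = (\<Sum>a\<in>A. if a = a0 then cnj (schar N t a) else 0)"
        by (intro sum.cong refl) (simp add: f_def)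
      then show ?thesis using fA a0 by simp
    qed
    also have "\<dots> = (\<Sum>a\<in>A. (\<Sum>s\<in>S. c s * schar N s a) * cnj (schar N t a))"
      using c by simp
    also have "\<dots> = (\<Sum>a\<in>A. \<Sum>s\<in>S. c s * (schar N s a * cnj (schar N t a)))"
      by (simp add: sum_distrib_right mult.assoc)
    also have "\<dots> = (\<Sum>s\<in>S. \<Sum>a\<in>A. c s * (schar N s a * cnj (schar N t a)))"
      by (rule sum.swap)
    also have "\<dots> = (\<Sum>s\<in>S. c s * (\<Sum>a\<in>A. schar N s a * cnj (schar N t a)))"
      by (simp add: sum_distrib_left)
    also have "\<dots> = (\<Sum>s\<in>S. if s = t then c t * of_nat (card A) else 0)"
      by (intro sum.cong refl) (auto simp: O t)
    also have "\<dots> = c t * of_nat (card A)" using fS t by simp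
    finally have "c t * of_nat (card A) = cnj (schar N t a0)" by simp
    then show ?thesis using cA0 by (simp add: eq_divide_eq)
  qed
  have "1 = f a0" by (simp add: f_def)
  also have "\<dots> = (\<Sum>s\<in>S. c s * schar N s a0)" using c a0 by simp
  also have "\<dots> = (\<Sum>s\<in>S. 1 / of_nat (card A))"
  proof (intro sum.cong refl)
    fix s assume "s \<in> S"
    then have "c s * schar N s a0 = (schar N s a0 * cnj (schar N s a0)) / of_nat (card A)"
      by (simp add: ct)
    then show "c s * schar N s a0 = 1 / of_nat (card A)" by (simp only: schar_unit)
  qed
  also have "\<dots> = of_nat (card S) / of_nat (card A)" by simp
  finally have "1 = of_nat (card S) / (of_nat (card A) :: complex)" .
  then have "of_nat (card S) = (of_nat (card A) :: complex)" using cA0 by (simp add: eq_divide_eq)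
  then show ?thesis by simp
qed


lemma grp_iff: "x \<in> grp N \<longleftrightarrow> 0 \<le> fst x \<and> fst x < int N \<and> 0 \<le> snd x \<and> snd x < int N"
  by (cases x) (auto simp: grp_def)

lemma gadd_in: "N > 0 \<Longrightarrow> gadd N x y \<in> grp N"
  by (simp add: grp_iff gadd_def)

lemma card_grp: "card (grp N) = N * N"
  by (simp add: grp_def card_cartesian_product)

lemma grp_eq:
  assumes "x \<in> grp N" "y \<in> grp N" "int N dvd fst x - fst y" "int N dvd snd x - snd y"
  shows "x = y"
proof -
  have "fst x mod int N = fst y mod int N" "snd x mod int N = snd y mod int N"
    using assms(3,4) by (simp_all add: mod_eq_dvd_iff)
  then have "fst x = fst y" "snd x = snd y" using assms(1,2) by (simp_all add: grp_iff)
  then show ?thesis by (simp add: prod_eq_iff)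
qed

lemma ee_symp_gadd_left:
  assumes N: "N > 0"
  shows "ee N (symp (gadd N x y) d) = ee N (symp x d) * ee N (symp y d)"
proof -
  have d1: "int N dvd (fst x + fst y) mod int N - (fst x + fst y)"
    by (simp add: mod_eq_dvd_iff[symmetric])
  have d2: "int N dvd (snd x + snd y) mod int N - (snd x + snd y)"
    by (simp add: mod_eq_dvd_iff[symmetric])
  have "symp (gadd N x y) d - (symp x d + symp y d) =
      ((fst x + fst y) mod int N - (fst x + fst y)) * snd d - ((snd x + snd y) mod int N - (snd x + snd y)) * fst d"
    by (simp add: symp_def gadd_def algebra_simps)
  then have "int N dvd symp (gadd N x y) d - (symp x d + symp y d)"
    using d1 d2 by (metis dvd_diff dvd_mult2)
  then have "ee N (symp (gadd N x y) d) = ee N (symp x d + symp y d)" using ee_cong[OF N] by blast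
  then show ?thesis by (simp add: ee_add)
qed

lemma symp_swap: "symp x y = - symp y x"
  by (simp add: symp_def)

lemma ee_symp_gadd_right:
  assumes N: "N > 0"
  shows "ee N (symp g (gadd N x y)) = ee N (symp g x) * ee N (symp g y)"
proof -
  have "ee N (symp g (gadd N x y)) = cnj (ee N (symp (gadd N x y) g))"
    by (simp add: symp_swap[of g] ee_minus)
  also have "\<dots> = cnj (ee N (symp x g)) * cnj (ee N (symp y g))"
    by (simp add: ee_symp_gadd_left[OF N])
  also have "\<dots> = ee N (symp g x) * ee N (symp g y)"
    by (simp add: symp_swap[of x] symp_swap[of y] ee_minus)
  finally show ?thesis .
qed

lemma geo0:
  assumes N: "N > 0" and e: "\<not> int N dvd e"
  shows "(\<Sum>g\<in>{0..<int N}. ee N (g * e)) = 0"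
proof -
  have im: "{0..<int N} = int ` {..<N}"
    by (simp add: image_int_atLeastLessThan lessThan_atLeast0)
  have "(\<Sum>g\<in>{0..<int N}. ee N (g * e)) = (\<Sum>k<N. ee N (int k * e))"
    unfolding im by (subst sum.reindex) (auto simp: inj_on_def)
  also have "\<dots> = (\<Sum>k<N. ee N e ^ k)" by (simp add: ee_nat_power)
  also have "\<dots> = 0"
  proof -
    have z1: "ee N e \<noteq> 1" using ee_eq_1_iff[OF N] e by simp
    have "ee N e ^ N = ee N (int N * e)" by (simp add: ee_nat_power)
    also have "\<dots> = 1" using ee_eq_1_iff[OF N] by simp
    finally have "ee N e ^ N = 1" .
    then show ?thesis using z1 by (simp add: sum_gp_strict)
  qed
  finally show ?thesis .
qed

lemma G0:
  assumes N: "N > 0" and d: "\<not> (int N dvd fst d \<and> int N dvd snd d)"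
  shows "(\<Sum>g\<in>grp N. ee N (symp g d)) = 0"
proof -
  have "(\<Sum>g\<in>grp N. ee N (symp g d)) = (\<Sum>g1\<in>{0..<int N}. \<Sum>g2\<in>{0..<int N}. ee N (symp (g1, g2) d))"
    unfolding grp_def by (simp add: sum.cartesian_product)
  also have "\<dots> = (\<Sum>g1\<in>{0..<int N}. \<Sum>g2\<in>{0..<int N}. ee N (g1 * snd d) * ee N (g2 * (- fst d)))"
    by (intro sum.cong refl) (simp add: symp_def ee_add[symmetric] algebra_simps)
  also have "\<dots> = (\<Sum>g1\<in>{0..<int N}. ee N (g1 * snd d)) * (\<Sum>g2\<in>{0..<int N}. ee N (g2 * (- fst d)))"
    by (simp add: sum_product)
  also have "\<dots> = 0"
  proof (cases "int N dvd snd d")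
    case True
    then have "\<not> int N dvd (- fst d)" using d by simp
    then have "(\<Sum>g2\<in>{0..<int N}. ee N (g2 * (- fst d))) = 0" by (rule geo0[OF N])
    then show ?thesis by (simp only: mult_zero_right)
  next
    case False
    then show ?thesis using geo0[OF N] by simp
  qed
  finally show ?thesis .
qed

lemma diff_not_dvd:
  assumes "s \<in> grp N" "t \<in> grp N" "s \<noteq> t"
  shows "\<not> (int N dvd fst s - fst t \<and> int N dvd snd s - snd t)"
  using grp_eq[OF assms(1,2)] assms(3) by blast

lemma tiling_bij:
  assumes N: "N > 0" and T: "tiling_pair N A B"
  shows "bij_betw (\<lambda>ab. gadd N (fst ab) (snd ab)) (A \<times> B) (grp N)"
proof -
  have ex: "\<forall>g\<in>grp N. \<exists>!ab. fst ab \<in> A \<and> snd ab \<in> B \<and> gadd N (fst ab) (snd ab) = g"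
    using T by (simp add: tiling_pair_def)
  show ?thesis unfolding bij_betw_def
  proof
    show "inj_on (\<lambda>ab. gadd N (fst ab) (snd ab)) (A \<times> B)"
    proof (rule inj_onI)
      fix u v assume u: "u \<in> A \<times> B" and v: "v \<in> A \<times> B"
        and e: "gadd N (fst u) (snd u) = gadd N (fst v) (snd v)"
      have "gadd N (fst u) (snd u) \<in> grp N" by (rule gadd_in[OF N])
      then have "\<exists>!ab. fst ab \<in> A \<and> snd ab \<in> B \<and> gadd N (fst ab) (snd ab) = gadd N (fst u) (snd u)"
        using ex by blast
      then obtain w where w: "\<And>y. fst y \<in> A \<and> snd y \<in> B \<and> gadd N (fst y) (snd y) = gadd N (fst u) (snd u) \<Longrightarrow> y = w"
        by blast
      have "u = w" using u by (intro w) auto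
      moreover have "v = w" using v e by (intro w) auto
      ultimately show "u = v" by simp
    qed
    show "(\<lambda>ab. gadd N (fst ab) (snd ab)) ` (A \<times> B) = grp N"
    proof
      show "(\<lambda>ab. gadd N (fst ab) (snd ab)) ` (A \<times> B) \<subseteq> grp N" using gadd_in[OF N] by auto
      show "grp N \<subseteq> (\<lambda>ab. gadd N (fst ab) (snd ab)) ` (A \<times> B)"
      proof
        fix g assume "g \<in> grp N"
        then obtain ab where "fst ab \<in> A" "snd ab \<in> B" "gadd N (fst ab) (snd ab) = g" using ex by blast
        then have "ab \<in> A \<times> B" by (simp add: mem_Times_iff)
        then show "g \<in> (\<lambda>ab. gadd N (fst ab) (snd ab)) ` (A \<times> B)"
          using \<open>gadd N (fst ab) (snd ab) = g\<close> by (intro image_eqI) auto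
      qed
    qed
  qed
qed

lemma tiling_card:
  assumes N: "N > 0" and T: "tiling_pair N A B"
  shows "card A * card B = N * N"
proof -
  have "card (A \<times> B) = card (grp N)" using bij_betw_same_card[OF tiling_bij[OF N T]] .
  then show ?thesis by (simp add: card_cartesian_product card_grp)
qed

lemma tiling_factor:
  assumes N: "N > 0" and T: "tiling_pair N A B"
  shows "(\<Sum>g\<in>grp N. ee N (symp g d)) = (\<Sum>a\<in>A. ee N (symp a d)) * (\<Sum>b\<in>B. ee N (symp b d))"
proof -
  have "(\<Sum>g\<in>grp N. ee N (symp g d)) = (\<Sum>ab\<in>A \<times> B. ee N (symp (gadd N (fst ab) (snd ab)) d))"
    using sum.reindex_bij_betw[OF tiling_bij[OF N T], of "\<lambda>g. ee N (symp g d)"] by simp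
  also have "\<dots> = (\<Sum>ab\<in>A \<times> B. ee N (symp (fst ab) d) * ee N (symp (snd ab) d))"
    by (simp add: ee_symp_gadd_left[OF N])
  also have "\<dots> = (\<Sum>a\<in>A. ee N (symp a d)) * (\<Sum>b\<in>B. ee N (symp b d))"
    unfolding sum_product sum.cartesian_product by (simp add: case_prod_beta)
  finally show ?thesis .
qed


lemma symp_gadd_cong:
  "int N dvd symp (gadd N x y) d - (symp x d + symp y d)"
proof -
  have d1: "int N dvd (fst x + fst y) mod int N - (fst x + fst y)"
    by (simp add: mod_eq_dvd_iff[symmetric])
  have d2: "int N dvd (snd x + snd y) mod int N - (snd x + snd y)"
    by (simp add: mod_eq_dvd_iff[symmetric])
  have "symp (gadd N x y) d - (symp x d + symp y d) =
      ((fst x + fst y) mod int N - (fst x + fst y)) * snd d - ((snd x + snd y) mod int N - (snd x + snd y)) * fst d"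
    by (simp add: symp_def gadd_def algebra_simps)
  then show ?thesis using d1 d2 by (metis dvd_diff dvd_mult2)
qed

lemma lag_sub: "lagrangian N H \<Longrightarrow> H \<subseteq> grp N"
  by (simp add: lagrangian_def)

lemma lag_perp: "lagrangian N H \<Longrightarrow> x \<in> H \<Longrightarrow> h \<in> H \<Longrightarrow> int N dvd symp x h"
  unfolding lagrangian_def symp_perp_def by blast

lemma lag_mem: "lagrangian N H \<Longrightarrow> g \<in> grp N \<Longrightarrow> (\<forall>h\<in>H. int N dvd symp g h) \<Longrightarrow> g \<in> H"
  unfolding lagrangian_def symp_perp_def by blast

lemma lag_closed:
  assumes N: "N > 0" and L: "lagrangian N H" and x: "x \<in> H" and y: "y \<in> H"
  shows "gadd N x y \<in> H"
proof (rule lag_mem[OF L gadd_in[OF N]], intro ballI)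
  fix h assume h: "h \<in> H"
  have "int N dvd symp x h + symp y h" using lag_perp[OF L x h] lag_perp[OF L y h] by simp
  moreover have "int N dvd symp (gadd N x y) h - (symp x h + symp y h)" by (rule symp_gadd_cong)
  ultimately show "int N dvd symp (gadd N x y) h" using dvd_add by fastforce
qed

lemma lag_char_sum:
  assumes N: "N > 0" and L: "lagrangian N H" and g: "g \<in> grp N"
  shows "(\<Sum>h\<in>H. ee N (symp g h)) = (if g \<in> H then of_nat (card H) else 0)"
proof (cases "g \<in> H")
  case True
  have "(\<Sum>h\<in>H. ee N (symp g h)) = (\<Sum>h\<in>H. 1)"
    by (intro sum.cong refl) (simp add: ee_eq_1_iff[OF N] lag_perp[OF L True])
  then show ?thesis using True by simp
next
  case False
  have HG: "H \<subseteq> grp N" using lag_sub[OF L] .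
  have fH: "finite H" using HG finite_subset grp_finite by blast
  obtain h0 where h0: "h0 \<in> H" "\<not> int N dvd symp g h0" using lag_mem[OF L g] False by blast
  define \<tau> where "\<tau> h = gadd N h0 h" for h
  have inj: "inj_on \<tau> H"
  proof (rule inj_onI)
    fix u v assume u: "u \<in> H" and v: "v \<in> H" and e: "\<tau> u = \<tau> v"
    have "(fst h0 + fst u) mod int N = (fst h0 + fst v) mod int N"
      "(snd h0 + snd u) mod int N = (snd h0 + snd v) mod int N"
      using e by (simp_all add: \<tau>_def gadd_def)
    then have "int N dvd fst u - fst v" "int N dvd snd u - snd v"
      by (simp_all add: mod_eq_dvd_iff)
    then show "u = v" using grp_eq u v HG by blast
  qed
  have sub: "\<tau> ` H \<subseteq> H" using lag_closed[OF N L h0(1)] by (auto simp: \<tau>_def)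
  have img: "\<tau> ` H = H"
    by (rule card_subset_eq[OF fH sub]) (simp add: card_image[OF inj])
  have "(\<Sum>h\<in>H. ee N (symp g h)) = (\<Sum>h\<in>\<tau> ` H. ee N (symp g h))" using img by simp
  also have "\<dots> = (\<Sum>h\<in>H. ee N (symp g (\<tau> h)))" by (rule sum.reindex[OF inj, unfolded comp_def])
  also have "\<dots> = ee N (symp g h0) * (\<Sum>h\<in>H. ee N (symp g h))"
    by (simp add: \<tau>_def ee_symp_gadd_right[OF N] sum_distrib_left)
  finally have "(1 - ee N (symp g h0)) * (\<Sum>h\<in>H. ee N (symp g h)) = 0"
    by (simp add: algebra_simps)
  moreover have "ee N (symp g h0) \<noteq> 1" using h0(2) ee_eq_1_iff[OF N] by simp
  ultimately show ?thesis using False by simp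
qed

lemma lag_card:
  assumes N: "N > 0" and L: "lagrangian N H"
  shows "card H = N"
proof -
  have HG: "H \<subseteq> grp N" using lag_sub[OF L] .
  have fH: "finite H" using HG finite_subset grp_finite by blast
  have z: "(0,0) \<in> H"
  proof (rule lag_mem[OF L])
    show "(0,0) \<in> grp N" using N by (simp add: grp_iff)
    show "\<forall>h\<in>H. int N dvd symp (0, 0) h" by (simp add: symp_def)
  qed
  define T where "T = (\<Sum>g\<in>grp N. \<Sum>h\<in>H. ee N (symp g h))"
  have "T = (\<Sum>g\<in>grp N. if g \<in> H then of_nat (card H) else 0)"
    unfolding T_def by (intro sum.cong refl) (simp add: lag_char_sum[OF N L])
  also have "\<dots> = (\<Sum>g\<in>H. of_nat (card H))"
    using HG by (simp add: sum.If_cases Int_absorb1)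
  finally have T1: "T = of_nat (card H * card H)" by simp
  have "T = (\<Sum>h\<in>H. \<Sum>g\<in>grp N. ee N (symp g h))" unfolding T_def by (rule sum.swap)
  also have "\<dots> = (\<Sum>h\<in>H. if h = (0,0) then of_nat (N * N) else 0)"
  proof (intro sum.cong refl)
    fix h assume h: "h \<in> H"
    show "(\<Sum>g\<in>grp N. ee N (symp g h)) = (if h = (0,0) then of_nat (N * N) else 0)"
    proof (cases "h = (0,0)")
      case True
      then show ?thesis by (simp add: symp_def card_grp)
    next
      case False
      have "\<not> (int N dvd fst h - fst (0::int,0::int) \<and> int N dvd snd h - snd (0::int,0::int))"
        by (rule diff_not_dvd) (use h HG N False in \<open>auto simp: grp_iff\<close>)
      then show ?thesis using G0[OF N] False by simp
    qed
  qed
  also have "\<dots> = of_nat (N * N)" using fH z by simp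
  finally have "card H * card H = N * N" using T1 by (metis of_nat_eq_iff)
  then show ?thesis
  proof -
    assume e: "card H * card H = N * N"
    show ?thesis
    proof (rule linorder_cases[of "card H" N])
      assume "card H < N" then have "card H * card H < N * N" by (intro mult_strict_mono) auto
      then show ?thesis using e by simp
    next
      assume "N < card H" then have "N * N < card H * card H" by (intro mult_strict_mono) auto
      then show ?thesis using e by simp
    qed
  qed
qed


lemma schar_prod:
  "schar N s b * cnj (schar N t b) = ee N (symp b (fst s - fst t, snd s - snd t))"
proof -
  have "symp b (fst s - fst t, snd s - snd t) = symp b s - symp b t"
    by (simp add: symp_def algebra_simps)
  then show ?thesis by (simp add: schar_ee ee_diff)
qed

definition Kprop :: "nat \<Rightarrow> (int \<times> int) set \<Rightarrow> bool" where
  "Kprop N A \<longleftrightarrow> (\<forall>a\<in>A. \<forall>a'\<in>A. a \<noteq> a' \<longrightarrow>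
      (\<Sum>x\<in>A. ee N (symp x (fst a - fst a', snd a - snd a'))) \<noteq> 0)"

lemma GEN:
  assumes N: "N > 0" and A: "A \<subseteq> grp N" and cA: "card A * card A = N * N"
    and K: "Kprop N A"
  shows "tiling_spectral_dual N A"
  unfolding tiling_spectral_dual_def
proof (intro conjI allI impI)
  have fA: "finite A" using A finite_subset grp_finite by blast
  have cA0: "card A > 0" using cA N by (metis gr0I mult_is_0)
  fix B assume B: "B \<subseteq> grp N" and T: "tiling_pair N A B"
  have "card A * card B = N * N" by (rule tiling_card[OF N T])
  then have "card A * card B = card A * card A" using cA by simp
  then have cB: "card A = card B" using cA0 by simp
  show "symp_spectral_pair N B A"
  proof (rule SP_build[OF B A cB], intro ballI impI)
    fix s t assume s: "s \<in> A" and t: "t \<in> A" and st: "s \<noteq> t"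
    let ?d = "(fst s - fst t, snd s - snd t)"
    have "\<not> (int N dvd fst ?d \<and> int N dvd snd ?d)"
      using diff_not_dvd[of s N t] s t st A by auto
    then have "(\<Sum>g\<in>grp N. ee N (symp g ?d)) = 0" by (rule G0[OF N])
    then have "(\<Sum>a\<in>A. ee N (symp a ?d)) * (\<Sum>b\<in>B. ee N (symp b ?d)) = 0"
      using tiling_factor[OF N T] by simp
    moreover have "(\<Sum>a\<in>A. ee N (symp a ?d)) \<noteq> 0" using K s t st by (simp add: Kprop_def)
    ultimately have "(\<Sum>b\<in>B. ee N (symp b ?d)) = 0" by simp
    then show "(\<Sum>b\<in>B. schar N s b * cnj (schar N t b)) = 0" by (simp add: schar_prod)
  qed
next
  have fA: "finite A" using A finite_subset grp_finite by blast
  have cA0: "card A > 0" using cA N by (metis gr0I mult_is_0)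
  fix S assume S: "S \<subseteq> grp N" and sp: "symp_spectral_pair N A S"
  have fS: "finite S" using S finite_subset grp_finite by blast
  have "A \<noteq> {}" using cA0 by auto
  then obtain a0 where "a0 \<in> A" by blast
  then have cS: "card S = card A" by (rule SP_card[OF sp])
  have ortho: "\<forall>s\<in>S. \<forall>t\<in>S. s \<noteq> t \<longrightarrow> (\<Sum>a\<in>A. schar N s a * cnj (schar N t a)) = 0"
    using sp by (simp add: symp_spectral_pair_def)
  define \<phi> where "\<phi> ab = gadd N (fst ab) (snd ab)" for ab :: "(int \<times> int) \<times> (int \<times> int)"
  have inj: "inj_on \<phi> (A \<times> S)"
  proof (rule inj_onI)
    fix u v assume u: "u \<in> A \<times> S" and v: "v \<in> A \<times> S" and e: "\<phi> u = \<phi> v"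
    obtain a s where us: "u = (a, s)" "a \<in> A" "s \<in> S" using u by auto
    obtain a' s' where vs: "v = (a', s')" "a' \<in> A" "s' \<in> S" using v by auto
    have "(fst a + fst s) mod int N = (fst a' + fst s') mod int N"
      "(snd a + snd s) mod int N = (snd a' + snd s') mod int N"
      using e us vs by (simp_all add: \<phi>_def gadd_def)
    then have d1: "int N dvd (fst a + fst s) - (fst a' + fst s')"
      and d2: "int N dvd (snd a + snd s) - (snd a' + snd s')"
      by (simp_all add: mod_eq_dvd_iff)
    have aG: "a \<in> grp N" "a' \<in> grp N" using us vs A by auto
    have sG: "s \<in> grp N" "s' \<in> grp N" using us vs S by auto
    show "u = v"
    proof (cases "s = s'")
      case True
      then have "int N dvd fst a - fst a'" "int N dvd snd a - snd a'" using d1 d2 by simp_all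
      then have "a = a'" using grp_eq aG by blast
      then show ?thesis using us vs True by simp
    next
      case False
      have aa: "a' \<noteq> a"
      proof
        assume "a' = a"
        then have "int N dvd fst s - fst s'" "int N dvd snd s - snd s'" using d1 d2 by simp_all
        then show False using grp_eq sG False by blast
      qed
      have "(\<Sum>x\<in>A. ee N (symp x (fst s - fst s', snd s - snd s'))) = 0"
        using ortho us vs False by (simp add: schar_prod)
      moreover have "(\<Sum>x\<in>A. ee N (symp x (fst s - fst s', snd s - snd s'))) =
          (\<Sum>x\<in>A. ee N (symp x (fst a' - fst a, snd a' - snd a)))"
      proof (intro sum.cong refl ee_cong[OF N])
        fix x
        have "symp x (fst s - fst s', snd s - snd s') - symp x (fst a' - fst a, snd a' - snd a) =
            fst x * ((snd a + snd s) - (snd a' + snd s')) - snd x * ((fst a + fst s) - (fst a' + fst s'))"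
          by (simp add: symp_def algebra_simps)
        then show "int N dvd symp x (fst s - fst s', snd s - snd s') - symp x (fst a' - fst a, snd a' - snd a)"
          using d1 d2 by (metis dvd_diff dvd_mult)
      qed
      moreover have "(\<Sum>x\<in>A. ee N (symp x (fst a' - fst a, snd a' - snd a))) \<noteq> 0"
        using K vs us aa by (simp add: Kprop_def)
      ultimately show ?thesis by simp
    qed
  qed
  have sub: "\<phi> ` (A \<times> S) \<subseteq> grp N" using gadd_in[OF N] by (auto simp: \<phi>_def)
  have "card (\<phi> ` (A \<times> S)) = card (grp N)"
    using card_image[OF inj] cS cA by (simp add: card_cartesian_product card_grp)
  then have img: "\<phi> ` (A \<times> S) = grp N" by (intro card_subset_eq[OF grp_finite sub])
  show "tiling_pair N A S"
    unfolding tiling_pair_def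
  proof (intro conjI A S ballI)
    fix g assume g: "g \<in> grp N"
    then obtain ab where ab: "ab \<in> A \<times> S" "\<phi> ab = g" using img by (metis imageE)
    show "\<exists>!ab. fst ab \<in> A \<and> snd ab \<in> S \<and> gadd N (fst ab) (snd ab) = g"
    proof (rule ex1I[of _ ab])
      show "fst ab \<in> A \<and> snd ab \<in> S \<and> gadd N (fst ab) (snd ab) = g" using ab by (auto simp: \<phi>_def)
      fix y assume y: "fst y \<in> A \<and> snd y \<in> S \<and> gadd N (fst y) (snd y) = g"
      then have "y \<in> A \<times> S" "\<phi> y = \<phi> ab" using ab by (auto simp: \<phi>_def mem_Times_iff)
      then show "y = ab" using inj ab(1) by (meson inj_onD)
    qed
  qed
qed


lemma case_i:
  assumes n: "n \<ge> 1" and L: "lagrangian n A"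
  shows "tiling_spectral_dual n A"
proof -
  have N: "n > 0" using n by simp
  have cA: "card A = n" by (rule lag_card[OF N L])
  have K: "Kprop n A" unfolding Kprop_def
  proof (intro ballI impI)
    fix a a' assume a: "a \<in> A" and a': "a' \<in> A" and ne: "a \<noteq> a'"
    have "(\<Sum>x\<in>A. ee n (symp x (fst a - fst a', snd a - snd a'))) = (\<Sum>x\<in>A. 1)"
    proof (intro sum.cong refl)
      fix x assume x: "x \<in> A"
      have "symp x (fst a - fst a', snd a - snd a') = symp x a - symp x a'"
        by (simp add: symp_def algebra_simps)
      moreover have "int n dvd symp x a - symp x a'" using lag_perp[OF L x a] lag_perp[OF L x a'] by simp
      ultimately show "ee n (symp x (fst a - fst a', snd a - snd a')) = 1" using ee_eq_1_iff[OF N] by simp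
    qed
    then show "(\<Sum>x\<in>A. ee n (symp x (fst a - fst a', snd a - snd a'))) \<noteq> 0" using cA N by simp
  qed
  show ?thesis by (rule GEN[OF N lag_sub[OF L] _ K]) (simp add: cA)
qed

lemma symp_self_diff:
  "symp a (fst a - fst a', snd a - snd a') = symp a' (fst a - fst a', snd a - snd a')"
  by (simp add: symp_def algebra_simps)

lemma case_ii:
  assumes p: "prime p" and A: "A \<subseteq> grp p" and L: "lagrangian p L" and T: "tiling_pair p A L"
  shows "tiling_spectral_dual p A"
proof -
  have N: "p > 0" using p prime_gt_0_nat by blast
  have cL: "card L = p" by (rule lag_card[OF N L])
  have "card A * card L = p * p" by (rule tiling_card[OF N T])
  then have cA: "card A = p" using cL N by simp
  have fA: "finite A" using A finite_subset grp_finite by blast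
  have K: "Kprop p A" unfolding Kprop_def
  proof (intro ballI impI)
    fix a a' assume a: "a \<in> A" and a': "a' \<in> A" and ne: "a \<noteq> a'"
    show "(\<Sum>x\<in>A. ee p (symp x (fst a - fst a', snd a - snd a'))) \<noteq> 0"
      by (rule RUp[OF p fA cA a a' ne symp_self_diff])
  qed
  show ?thesis by (rule GEN[OF N A _ K]) (simp add: cA)
qed

lemma mult_set_card:
  assumes p: "p > 0"
  shows "card {y::int. 0 \<le> y \<and> y < int (p^2) \<and> int p dvd y} = p"
proof -
  have "{y::int. 0 \<le> y \<and> y < int (p^2) \<and> int p dvd y} = (\<lambda>i. int p * i) ` {0..<int p}"
  proof (intro set_eqI iffI)
    fix y assume "y \<in> {y::int. 0 \<le> y \<and> y < int (p^2) \<and> int p dvd y}"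
    then obtain i where y: "y = int p * i" "0 \<le> y" "y < int p * int p" by (auto simp: power2_eq_square)
    then have "0 \<le> i" "i < int p" using p by (auto simp: zero_le_mult_iff)
    then show "y \<in> (\<lambda>i. int p * i) ` {0..<int p}" using y by auto
  next
    fix y assume "y \<in> (\<lambda>i. int p * i) ` {0..<int p}"
    then obtain i where i: "y = int p * i" "0 \<le> i" "i < int p" by auto
    then have "int p * i < int p * int p" using p by simp
    then show "y \<in> {y::int. 0 \<le> y \<and> y < int (p^2) \<and> int p dvd y}" using i by (auto simp: power2_eq_square)
  qed
  moreover have "inj_on (\<lambda>i. int p * i) {0..<int p}" using p by (auto simp: inj_on_def)
  ultimately show ?thesis by (simp add: card_image)
qed

lemma case_iii:
  fixes p :: nat
  defines "L0 \<equiv> {x \<in> grp (p^2). int p dvd fst x \<and> int p dvd snd x}"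
  assumes p: "prime p" and A: "A \<subseteq> grp (p^2)" and T: "tiling_pair (p^2) A L0"
  shows "tiling_spectral_dual (p^2) A"
proof -
  have p0: "p > 0" using p prime_gt_0_nat by blast
  have N: "p^2 > 0" using p0 by simp
  define M where "M = {y::int. 0 \<le> y \<and> y < int (p^2) \<and> int p dvd y}"
  have L0M: "L0 = M \<times> M" unfolding L0_def M_def grp_def by auto
  have cL: "card L0 = p * p" using mult_set_card[OF p0] by (simp add: L0M M_def card_cartesian_product)
  have "card A * card L0 = p^2 * p^2" by (rule tiling_card[OF N T])
  then have cA: "card A = p^2" using cL p0 by (simp add: power2_eq_square)
  have fA: "finite A" using A finite_subset grp_finite by blast
  have ex: "\<forall>g\<in>grp (p^2). \<exists>!ab. fst ab \<in> A \<and> snd ab \<in> L0 \<and> gadd (p^2) (fst ab) (snd ab) = g"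
    using T by (simp add: tiling_pair_def)
  have injp: "x = y" if x: "x \<in> A" and y: "y \<in> A" and d1: "int p dvd fst x - fst y"
    and d2: "int p dvd snd x - snd y" for x y
  proof -
    have xg: "x \<in> grp (p^2)" using x A by auto
    have yg: "y \<in> grp (p^2)" using y A by auto
    define l where "l = ((fst x - fst y) mod int (p^2), (snd x - snd y) mod int (p^2))"
    have pp: "int p dvd int (p^2)" by (simp add: power2_eq_square)
    have lL: "l \<in> L0" unfolding L0_def l_def using d1 d2 pp N
      by (simp add: grp_iff dvd_mod_iff)
    have zL: "(0,0) \<in> L0" unfolding L0_def using N by (simp add: grp_iff)
    have e1: "gadd (p^2) x (0,0) = x" using xg by (simp add: gadd_def grp_iff)
    have e2: "gadd (p^2) y l = x" using xg
      by (simp add: gadd_def grp_iff l_def mod_add_right_eq)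
    have "(x, (0::int,0::int)) = (y, l)"
      using ex xg x y zL lL e1 e2 by (metis fst_conv snd_conv)
    then show "x = y" by simp
  qed
  have K: "Kprop (p^2) A" unfolding Kprop_def
  proof (intro ballI impI)
    fix a a' assume a: "a \<in> A" and a': "a' \<in> A" and ne: "a \<noteq> a'"
    define d where "d = (fst a - fst a', snd a - snd a')"
    define f where "f x = symp x d" for x
    have nd: "\<not> (int p dvd fst d \<and> int p dvd snd d)"
      using injp[OF a a'] ne by (auto simp: d_def)
    have pi: "prime (int p)" using p by simp
    have bound: "card {x\<in>A. f x mod int p = r} \<le> p" for r
    proof -
      define Fr where "Fr = {x\<in>A. f x mod int p = r}"
      have fFr: "finite Fr" using fA by (simp add: Fr_def)
      have cong: "int p dvd (fst x - fst y) * snd d - (snd x - snd y) * fst d"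
        if "x \<in> Fr" "y \<in> Fr" for x y
      proof -
        have "f x mod int p = f y mod int p" using that by (simp add: Fr_def)
        then have "int p dvd f x - f y" by (simp add: mod_eq_dvd_iff)
        moreover have "f x - f y = (fst x - fst y) * snd d - (snd x - snd y) * fst d"
          by (simp add: f_def symp_def algebra_simps)
        ultimately show ?thesis by simp
      qed
      show ?thesis
      proof (cases "int p dvd fst d")
        case False
        define \<pi> where "\<pi> x = fst x mod int p" for x :: "int \<times> int"
        have "inj_on \<pi> Fr"
        proof (rule inj_onI)
          fix x y assume x: "x \<in> Fr" and y: "y \<in> Fr" and e: "\<pi> x = \<pi> y"
          have h1: "int p dvd fst x - fst y" using e by (simp add: \<pi>_def mod_eq_dvd_iff)
          have "int p dvd (fst x - fst y) * snd d - ((fst x - fst y) * snd d - (snd x - snd y) * fst d)"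
            by (rule dvd_diff[OF _ cong[OF x y]]) (simp add: h1)
          then have "int p dvd (snd x - snd y) * fst d" by simp
          then have h2: "int p dvd snd x - snd y" using False pi by (simp add: prime_dvd_mult_iff)
          show "x = y" using injp h1 h2 x y by (simp add: Fr_def)
        qed
        moreover have "\<pi> ` Fr \<subseteq> {0..<int p}" using p0 by (auto simp: \<pi>_def)
        ultimately have "card Fr \<le> card {0..<int p}"
          using card_image card_mono[OF finite_atLeastLessThan_int] by metis
        then show ?thesis unfolding Fr_def by simp
      next
        case True
        then have F2: "\<not> int p dvd snd d" using nd by simp
        define \<pi> where "\<pi> x = snd x mod int p" for x :: "int \<times> int"
        have "inj_on \<pi> Fr"
        proof (rule inj_onI)
          fix x y assume x: "x \<in> Fr" and y: "y \<in> Fr" and e: "\<pi> x = \<pi> y"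
          have h2: "int p dvd snd x - snd y" using e by (simp add: \<pi>_def mod_eq_dvd_iff)
          have "int p dvd ((fst x - fst y) * snd d - (snd x - snd y) * fst d) + (snd x - snd y) * fst d"
            by (rule dvd_add[OF cong[OF x y]]) (simp add: h2)
          then have "int p dvd (fst x - fst y) * snd d" by simp
          then have h1: "int p dvd fst x - fst y" using F2 pi by (simp add: prime_dvd_mult_iff)
          show "x = y" using injp h1 h2 x y by (simp add: Fr_def)
        qed
        moreover have "\<pi> ` Fr \<subseteq> {0..<int p}" using p0 by (auto simp: \<pi>_def)
        ultimately have "card Fr \<le> card {0..<int p}"
          using card_image card_mono[OF finite_atLeastLessThan_int] by metis
        then show ?thesis unfolding Fr_def by simp
      qed
    qed
    have "(\<Sum>x\<in>A. ee (p^2) (f x)) \<noteq> 0"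
      by (rule RUp2[OF p fA bound a a' ne]) (simp add: f_def d_def symp_self_diff)
    then show "(\<Sum>x\<in>A. ee (p^2) (symp x (fst a - fst a', snd a - snd a'))) \<noteq> 0"
      by (simp add: f_def d_def)
  qed
  show ?thesis by (rule GEN[OF N A _ K]) (simp add: cA)
qed


theorem mainTheorem4:
  fixes p n :: nat and A :: "(int \<times> int) set"
  assumes "prime p" and "n \<ge> 1"
    and "lagrangian n A
         \<or> (A \<subseteq> grp p \<and> (\<exists>L. lagrangian p L \<and> tiling_pair p A L))
         \<or> (A \<subseteq> grp (p^2) \<and>
            tiling_pair (p^2) A {x \<in> grp (p^2). int p dvd fst x \<and> int p dvd snd x})"
  shows "(lagrangian n A \<longrightarrow> tiling_spectral_dual n A)
       \<and> (A \<subseteq> grp p \<and> (\<exists>L. lagrangian p L \<and> tiling_pair p A L) \<longrightarrow> tiling_spectral_dual p A)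
       \<and> (A \<subseteq> grp (p^2) \<and>
            tiling_pair (p^2) A {x \<in> grp (p^2). int p dvd fst x \<and> int p dvd snd x}
            \<longrightarrow> tiling_spectral_dual (p^2) A)"
proof (intro conjI impI)
  assume "lagrangian n A"
  then show "tiling_spectral_dual n A" by (rule case_i[OF assms(2)])
next
  assume h: "A \<subseteq> grp p \<and> (\<exists>L. lagrangian p L \<and> tiling_pair p A L)"
  then obtain L where "lagrangian p L" "tiling_pair p A L" by blast
  then show "tiling_spectral_dual p A" using case_ii[OF assms(1)] h by blast
next
  assume h: "A \<subseteq> grp (p^2) \<and>
            tiling_pair (p^2) A {x \<in> grp (p^2). int p dvd fst x \<and> int p dvd snd x}"
  then show "tiling_spectral_dual (p^2) A" using case_iii[OF assms(1)] by blast
qed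

end
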